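(* Let $h:[0,\infty)\to[0,\infty)$ be differentiable with $\lim_{x\to\infty}h'(x)=0$, and suppose there is $x_0\ge0$ such that $h$ is concave on $[x_0,\infty)$; let $\rho_h$ be the finite positive measure on $[x_0,\infty)$ with $h'(x)=\rho_h([x,\infty))$ for $x\ge x_0$. Let $Z$ be a nonnegative random variable and $\phi(\lambda)=-\log\mathbb{E}[e^{-\lambda Z}]$. 1) $\mathbb{E}[h(Z)]<\infty$ if and only if $\int_{x_0}^\infty\min\big(1,\phi(1/x)\big)\,x\,\rho_h(dx)<\infty$. 2) Assume $Z$ is infinitely divisible with $\phi(\lambda)=d\lambda+\int_{(0,\infty)}(1-e^{-\lambda x})\Pi(dx)$, $d\ge0$, $\int(x\wedge1)\Pi(dx)<\infty$. Then the following are equivalent: (i) $\mathbb{E}[h(Z)]<\infty$; (ii) $\int_{[x_0,\infty)}\chi_h(u)\Pi(du)<\infty$, where $\chi_h(u)=\int_{[x_0,\infty)}(x\wedge u)\rho_h(dx)$, which for $u\ge x_0$ equals $h(u)-h(x_0)+x_0h'(x_0)$; (iii) $\int_{[x_0,\infty)}\big(h(u)-h(x_0)\big)\Pi(du)<\infty$. *)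

theory Defs
  imports "HOL-Probability.Probability"
begin

definition laplace_exponent :: "'a measure \<Rightarrow> ('a \<Rightarrow> real) \<Rightarrow> real \<Rightarrow> real" where
  "laplace_exponent M Z l = - ln (\<integral>\<omega>. exp (- l * Z \<omega>) \<partial>M)"

definition chi :: "real measure \<Rightarrow> real \<Rightarrow> real \<Rightarrow> ennreal" where
  "chi rho x0 u = (\<integral>\<^sup>+ x \<in> {x0..}. ennreal (min x u) \<partial>rho)"

end

theory Submission
  imports Defs
begin


lemma exp_bounds:
  fixes t :: real assumes "t \<ge> 0"
  shows "(1 - exp (-1)) * min 1 t \<le> 1 - exp (-t)" and "1 - exp (-t) \<le> min 1 t"
proof -
  have e1: "exp (-1::real) < 1" by simp
  show "1 - exp (-t) \<le> min 1 t"
    using exp_ge_add_one_self[of "-t"] by simp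
  show "(1 - exp (-1)) * min 1 t \<le> 1 - exp (-t)"
  proof (cases "t \<le> 1")
    case True
    have "exp ((1 - t) *\<^sub>R 0 + t *\<^sub>R (-1)) \<le> (1 - t) * exp 0 + t * exp (-1::real)"
      using convex_onD[OF exp_convex, of t 0 "-1"] True assms by simp
    then show ?thesis using True by (simp add: algebra_simps)
  next
    case False
    then show ?thesis using e1 by simp
  qed
qed



lemma part1_pointwise:
  fixes M :: "'a measure" and Z :: "'a \<Rightarrow> real" and x :: real
  assumes M: "prob_space M" and Zm: "Z \<in> borel_measurable M" and Zn: "\<And>\<omega>. Z \<omega> \<ge> 0"
    and x: "x > 0"
  shows "(\<integral>\<^sup>+\<omega>. ennreal (min x (Z \<omega>)) \<partial>M) \<le> ennreal (1/(1 - exp (-1))) * ennreal (min 1 (laplace_exponent M Z (1/x)) * x)"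
    and "ennreal (min 1 (laplace_exponent M Z (1/x)) * x) \<le> ennreal (1/(1 - exp (-1))) * (\<integral>\<^sup>+\<omega>. ennreal (min x (Z \<omega>)) \<partial>M)"
proof -
  interpret prob_space M by fact
  define c :: real where "c = 1 - exp (-1)"
  have c: "c > 0" "c \<le> 1" unfolding c_def by auto
  define L where "L = (\<integral>\<omega>. exp (- (1/x) * Z \<omega>) \<partial>M)"
  define E where "E = (\<integral>\<omega>. min x (Z \<omega>) \<partial>M)"
  have intL: "integrable M (\<lambda>\<omega>. exp (- (1/x) * Z \<omega>))"
    by (rule integrable_const_bound[where B=1]) (use Zn x Zm in auto)
  have intE: "integrable M (\<lambda>\<omega>. min x (Z \<omega>))"
    by (rule integrable_const_bound[where B=x]) (use Zn x Zm in auto)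
  have L1: "L \<le> 1"
  proof -
    have "L \<le> (\<integral>\<omega>. 1 \<partial>M)" unfolding L_def
      by (rule integral_mono[OF intL]) (use Zn x in auto)
    then show ?thesis by (simp add: prob_space)
  qed
  have L0: "L > 0"
  proof -
    have "L \<ge> 0" unfolding L_def by (rule integral_nonneg_AE) auto
    moreover have "L \<noteq> 0"
    proof
      assume "L = 0"
      then have "AE \<omega> in M. exp (- (1/x) * Z \<omega>) = 0"
        using integral_nonneg_eq_0_iff_AE[OF intL] unfolding L_def by auto
      then have "AE \<omega> in M. False" by simp
      then show False by simp
    qed
    ultimately show ?thesis by simp
  qed
  have pw: "c * min x (Z \<omega>) \<le> x * (1 - exp (- (1/x) * Z \<omega>)) \<and> x * (1 - exp (- (1/x) * Z \<omega>)) \<le> min x (Z \<omega>)" for \<omega>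
  proof -
    have t: "Z \<omega> / x \<ge> 0" using Zn x by simp
    have m: "min 1 (Z \<omega> / x) * x = min x (Z \<omega>)" using x
      by (auto simp: min_def field_simps)
    have e: "- (1/x) * Z \<omega> = - (Z \<omega> / x)" by simp
    have "c * min 1 (Z \<omega> / x) * x \<le> (1 - exp (- (Z \<omega> / x))) * x"
      using exp_bounds(1)[OF t] x unfolding c_def by (intro mult_right_mono) auto
    moreover have "(1 - exp (- (Z \<omega> / x))) * x \<le> min 1 (Z \<omega> / x) * x"
      using exp_bounds(2)[OF t] x by (intro mult_right_mono) auto
    ultimately show ?thesis using m e by (simp add: mult.commute mult.left_commute mult.assoc)
  qed
  have intD: "integrable M (\<lambda>\<omega>. x * (1 - exp (- (1/x) * Z \<omega>)))"
    using intL by auto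
  have D: "(\<integral>\<omega>. x * (1 - exp (- (1/x) * Z \<omega>)) \<partial>M) = x * (1 - L)"
    unfolding L_def using intL by (simp add: integral_diff prob_space)
  have E1: "c * E \<le> x * (1 - L)"
  proof -
    have "c * E = (\<integral>\<omega>. c * min x (Z \<omega>) \<partial>M)" unfolding E_def by simp
    also have "\<dots> \<le> (\<integral>\<omega>. x * (1 - exp (- (1/x) * Z \<omega>)) \<partial>M)"
      by (rule integral_mono) (use intE intD pw in auto)
    also have "\<dots> = x * (1 - L)" by (rule D)
    finally show ?thesis .
  qed
  have E2: "x * (1 - L) \<le> E"
  proof -
    have "(\<integral>\<omega>. x * (1 - exp (- (1/x) * Z \<omega>)) \<partial>M) \<le> E" unfolding E_def
      by (rule integral_mono) (use intE intD pw in auto)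
    then show ?thesis by (simp only: D)
  qed
  define p where "p = laplace_exponent M Z (1/x)"
  have p: "p = - ln L" unfolding p_def laplace_exponent_def L_def by simp
  have p0: "p \<ge> 0" using p L0 L1 by simp
  have eL: "exp (- p) = L" using p L0 by simp
  have P1: "c * min 1 p \<le> 1 - L" and P2: "1 - L \<le> min 1 p"
    using exp_bounds[OF p0] eL unfolding c_def by auto
  have Epos: "E \<ge> 0" unfolding E_def by (rule integral_nonneg_AE) (use Zn x in auto)
  have nnE: "(\<integral>\<^sup>+\<omega>. ennreal (min x (Z \<omega>)) \<partial>M) = ennreal E"
    unfolding E_def by (rule nn_integral_eq_integral[OF intE]) (use Zn x in auto)
  have r1: "E \<le> (1/c) * (min 1 p * x)"
  proof -
    have "x * (1 - L) \<le> x * min 1 p" using P2 x by (intro mult_left_mono) auto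
    then have "c * E \<le> min 1 p * x" using E1 by (simp add: mult.commute)
    then show ?thesis using c by (simp add: field_simps mult.commute)
  qed
  have r2: "min 1 p * x \<le> (1/c) * E"
  proof -
    have "x * (c * min 1 p) \<le> x * (1 - L)" using P1 x by (intro mult_left_mono) auto
    then have "c * (min 1 p * x) \<le> E" using E2 by (simp add: mult_ac)
    then show ?thesis using c by (simp add: field_simps mult.commute)
  qed
  have mp: "min 1 p * x \<ge> 0" using p0 x by simp
  show "(\<integral>\<^sup>+\<omega>. ennreal (min x (Z \<omega>)) \<partial>M) \<le> ennreal (1/(1 - exp (-1))) * ennreal (min 1 (laplace_exponent M Z (1/x)) * x)"
    unfolding nnE p_def[symmetric] c_def[symmetric]
    using r1 c mp by (simp add: ennreal_mult[symmetric])
  show "ennreal (min 1 (laplace_exponent M Z (1/x)) * x) \<le> ennreal (1/(1 - exp (-1))) * (\<integral>\<^sup>+\<omega>. ennreal (min x (Z \<omega>)) \<partial>M)"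
    unfolding nnE p_def[symmetric] c_def[symmetric]
    using r2 c Epos by (simp add: ennreal_mult[symmetric])
qed



lemma chi_formula:
  fixes h h' :: "real \<Rightarrow> real" and x0 u :: real and rho :: "real measure"
  assumes h_deriv: "\<forall>x\<ge>0. (h has_real_derivative h' x) (at x within {0..})"
    and x0: "x0 \<ge> 0"
    and rho_sets: "sets rho = sets borel"
    and rho_finite: "finite_measure rho"
    and rho_supp: "emeasure rho {..<x0} = 0"
    and rho_h': "\<forall>x\<ge>x0. h' x = measure rho {x..}"
    and u: "u \<ge> x0"
  shows "(\<integral>\<^sup>+x. ennreal (min x u) \<partial>rho) = ennreal (h u - h x0 + x0 * h' x0)"
    and "h u - h x0 \<ge> 0"
proof -
  interpret rho: finite_measure rho by fact
  have sp: "space rho = UNIV" using sets_eq_imp_space_eq[OF rho_sets] by simp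
  have AEx0: "AE x in rho. x \<ge> x0"
  proof (rule AE_I[where N="{..<x0}"])
    show "{x \<in> space rho. \<not> x0 \<le> x} \<subseteq> {..<x0}" by auto
    show "emeasure rho {..<x0} = 0" by fact
    show "{..<x0} \<in> sets rho" using rho_sets by simp
  qed
  have meas_rho: "measurable rho = measurable borel" 
    using measurable_cong_sets[OF rho_sets refl] by (rule ext)
  have FTC: "(h' has_integral h u - h x0) {x0..u}"
  proof (rule fundamental_theorem_of_calculus[OF u])
    fix t assume t: "t \<in> {x0..u}"
    then have "(h has_real_derivative h' t) (at t within {0..})" using h_deriv x0 by auto
    then have "(h has_real_derivative h' t) (at t within {x0..u})"
      by (rule has_field_derivative_subset) (use x0 in auto)
    then show "(h has_vector_derivative h' t) (at t within {x0..u})"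
      by (simp add: has_real_derivative_iff_has_vector_derivative)
  qed
  have h'nn: "t \<in> {x0..u} \<Longrightarrow> 0 \<le> h' t" for t using rho_h' by auto
  have I1: "(\<integral>\<^sup>+t. ennreal (h' t) * indicator {x0..u} t \<partial>lborel) = ennreal (h u - h x0)"
    by (rule nn_integral_has_integral_lebesgue'[OF h'nn FTC])
  show "h u - h x0 \<ge> 0"
    using has_integral_nonneg[OF FTC h'nn] by simp
  define f where "f t x = ennreal (if x0 \<le> t \<and> t \<le> u \<and> t \<le> x then 1 else 0)" for t x :: real
  have fm: "case_prod f \<in> borel_measurable (lborel \<Otimes>\<^sub>M rho)"
  proof -
    have "case_prod f \<in> borel_measurable (borel \<Otimes>\<^sub>M borel)" unfolding f_def by measurable
    moreover have "sets (lborel \<Otimes>\<^sub>M rho) = sets (borel \<Otimes>\<^sub>M borel)"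
      by (rule sets_pair_measure_cong) (simp_all add: rho_sets)
    ultimately show ?thesis using measurable_cong_sets by blast
  qed
  interpret pair_sigma_finite lborel rho
    by (simp add: pair_sigma_finite_def lborel.sigma_finite_measure_axioms rho.sigma_finite_measure_axioms)
  have inner1: "(\<integral>\<^sup>+t. f t x \<partial>lborel) = ennreal (min x u - x0)" if x: "x \<ge> x0" for x
  proof -
    have "(\<integral>\<^sup>+t. f t x \<partial>lborel) = (\<integral>\<^sup>+t. indicator {x0..min x u} t \<partial>lborel)"
      by (rule nn_integral_cong) (auto simp: f_def indicator_def)
    also have "\<dots> = ennreal (min x u - x0)" using x u by simp
    finally show ?thesis .
  qed
  have inner2: "(\<integral>\<^sup>+x. f t x \<partial>rho) = ennreal (h' t) * indicator {x0..u} t" for t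
  proof (cases "x0 \<le> t \<and> t \<le> u")
    case True
    have "(\<integral>\<^sup>+x. f t x \<partial>rho) = (\<integral>\<^sup>+x. indicator {t..} x \<partial>rho)"
      by (rule nn_integral_cong) (use True in \<open>auto simp: f_def indicator_def\<close>)
    also have "\<dots> = emeasure rho {t..}" using rho_sets by simp
    also have "\<dots> = ennreal (h' t)" using rho_h' True by (simp add: rho.emeasure_eq_measure)
    finally show ?thesis using True by simp
  next
    case False
    then show ?thesis by (auto simp: f_def)
  qed
  have "(\<integral>\<^sup>+x. ennreal (min x u) \<partial>rho) = (\<integral>\<^sup>+x. ennreal x0 + ennreal (min x u - x0) \<partial>rho)"
    by (rule nn_integral_cong_AE) (use AEx0 u x0 in \<open>auto simp: ennreal_plus[symmetric] simp del: ennreal_plus\<close>)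
  also have "\<dots> = (\<integral>\<^sup>+x. ennreal x0 \<partial>rho) + (\<integral>\<^sup>+x. ennreal (min x u - x0) \<partial>rho)"
    by (rule nn_integral_add) (simp_all add: meas_rho)
  also have "(\<integral>\<^sup>+x. ennreal (min x u - x0) \<partial>rho) = (\<integral>\<^sup>+x. (\<integral>\<^sup>+t. f t x \<partial>lborel) \<partial>rho)"
    by (rule nn_integral_cong_AE) (use AEx0 inner1 in auto)
  also have "\<dots> = (\<integral>\<^sup>+t. (\<integral>\<^sup>+x. f t x \<partial>rho) \<partial>lborel)"
    by (rule Fubini'[OF fm])
  also have "\<dots> = ennreal (h u - h x0)" unfolding inner2 by (rule I1)
  also have "(\<integral>\<^sup>+x. ennreal x0 \<partial>rho) = ennreal (x0 * h' x0)"
  proof -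
    have "measure rho {x0..} = measure rho UNIV"
    proof -
      have "measure rho UNIV = measure rho ({..<x0} \<union> {x0..})" proof -
        have "{..<x0} \<union> {x0..} = (UNIV::real set)" by auto
        then show ?thesis by simp
      qed
      also have "\<dots> = measure rho {..<x0} + measure rho {x0..}"
        by (rule rho.finite_measure_Union) (auto simp: rho_sets)
      also have "measure rho {..<x0} = 0" using rho_supp by (simp add: measure_def)
      finally show ?thesis by simp
    qed
    then show ?thesis using rho_h' x0 sp
      by (simp add: rho.emeasure_eq_measure ennreal_mult)
  qed
  finally show "(\<integral>\<^sup>+x. ennreal (min x u) \<partial>rho) = ennreal (h u - h x0 + x0 * h' x0)"
    using \<open>h u - h x0 \<ge> 0\<close> x0 rho_h'
    by (simp add: ennreal_plus[symmetric] add.commute del: ennreal_plus)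
qed



lemma fin_cmp:
  fixes a b :: "'b \<Rightarrow> ennreal" and c k :: real
  assumes N: "finite_measure N" and bm: "b \<in> borel_measurable N"
    and le: "AE x in N. a x \<le> ennreal c * b x + ennreal k"
    and fin: "integral\<^sup>N N b < \<infinity>"
  shows "integral\<^sup>N N a < \<infinity>"
proof -
  interpret finite_measure N by fact
  have "integral\<^sup>N N a \<le> (\<integral>\<^sup>+x. ennreal c * b x + ennreal k \<partial>N)"
    by (rule nn_integral_mono_AE[OF le])
  also have "\<dots> = (\<integral>\<^sup>+x. ennreal c * b x \<partial>N) + (\<integral>\<^sup>+x. ennreal k \<partial>N)"
    by (rule nn_integral_add) (use bm in auto)
  also have "\<dots> = ennreal c * integral\<^sup>N N b + ennreal k * emeasure N (space N)"
    using bm by (simp add: nn_integral_cmult)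
  also have "\<dots> < \<infinity>"
  proof -
    have "emeasure N (space N) < \<top>" using emeasure_finite[of "space N"] by (simp add: less_top[symmetric])
    then show ?thesis using fin by (simp add: ennreal_mult_less_top)
  qed
  finally show ?thesis .
qed

lemma pw_bound:
  fixes x z :: real assumes x: "x > 0" and z: "z \<ge> 0"
  shows "(1 - exp (-1)) * min x z \<le> x * (1 - exp (- (1/x) * z))"
    and "x * (1 - exp (- (1/x) * z)) \<le> min x z"
proof -
  have t: "z / x \<ge> 0" using z x by simp
  have m: "min x z = min 1 (z / x) * x" using x
    by (auto simp: min_def field_simps)
  have e: "- (1/x) * z = - (z / x)" by simp
  have "(1 - exp (-1)) * min 1 (z / x) * x \<le> (1 - exp (- (z / x))) * x"
    using exp_bounds(1)[OF t] x by (intro mult_right_mono) auto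
  then show "(1 - exp (-1)) * min x z \<le> x * (1 - exp (- (1/x) * z))"
    unfolding m e by (metis mult.commute mult.assoc)
  have "(1 - exp (- (z / x))) * x \<le> min 1 (z / x) * x"
    using exp_bounds(2)[OF t] x by (intro mult_right_mono) auto
  then show "x * (1 - exp (- (1/x) * z)) \<le> min x z"
    unfolding m e by (metis mult.commute)
qed

lemma AE_Pi_pos:
  fixes Pi :: "real measure"
  assumes "sets Pi = sets borel" "emeasure Pi {..0::real} = 0"
  shows "AE u in Pi. u > 0"
proof (rule AE_I[where N="{..0}"])
  show "{x \<in> space Pi. \<not> 0 < x} \<subseteq> {..0}" by auto
qed (use assms in auto)

lemma sigma_finite_Pi:
  fixes Pi :: "real measure"
  assumes Ps: "sets Pi = sets borel" and P0: "emeasure Pi {..0} = 0"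
    and Pm: "(\<integral>\<^sup>+x. ennreal (min x 1) \<partial>Pi) < \<infinity>"
  shows "sigma_finite_measure Pi"
proof
  have sp: "space Pi = UNIV" using sets_eq_imp_space_eq[OF Ps] by simp
  define A where "A = range (\<lambda>n::nat. {..0::real} \<union> {1 / real (Suc n)..})"
  have fin: "emeasure Pi ({..0} \<union> {1 / real (Suc n)..}) \<noteq> \<infinity>" for n
  proof -
    have "emeasure Pi {1 / real (Suc n)..} = (\<integral>\<^sup>+x. indicator {1 / real (Suc n)..} x \<partial>Pi)"
      using Ps by simp
    also have "\<dots> \<le> (\<integral>\<^sup>+x. ennreal (real (Suc n)) * ennreal (min x 1) \<partial>Pi)"
    proof (rule nn_integral_mono)
      fix x
      show "indicator {1 / real (Suc n)..} x \<le> ennreal (real (Suc n)) * ennreal (min x 1)"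
      proof (cases "x \<ge> 1 / real (Suc n)")
        case True
        moreover have "0 < 1 / real (Suc n)" by simp
        ultimately have xp: "x > 0" by linarith
        with True have "1 \<le> real (Suc n) * min x 1"
          by (auto simp: min_def field_simps)
        then have "ennreal 1 \<le> ennreal (real (Suc n) * min x 1)" by (rule ennreal_leI)
        then show ?thesis using True xp
          by (subst ennreal_mult[symmetric]) (auto simp: min_def)
      qed simp
    qed
    also have "\<dots> = ennreal (real (Suc n)) * (\<integral>\<^sup>+x. ennreal (min x 1) \<partial>Pi)"
      by (rule nn_integral_cmult) (simp add: measurable_cong_sets[OF Ps refl])
    also have "\<dots> < \<infinity>" using Pm by (simp add: ennreal_mult_less_top)
    finally have "emeasure Pi {1 / real (Suc n)..} < \<infinity>" .
    moreover have "emeasure Pi ({..0} \<union> {1 / real (Suc n)..}) \<le> emeasure Pi {..0} + emeasure Pi {1 / real (Suc n)..}"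
      by (rule emeasure_subadditive) (use Ps in auto)
    ultimately show ?thesis using P0 by (auto simp: top_unique)
  qed
  have un: "\<Union>A = UNIV"
  proof -
    have "x \<in> \<Union>A" for x
    proof (cases "x \<le> 0")
      case False
      then obtain n where "inverse (real (Suc n)) < x" using reals_Archimedean[of x] by auto
      then have "x \<in> {..0} \<union> {1 / real (Suc n)..}" by (simp add: inverse_eq_divide)
      then show ?thesis unfolding A_def by blast
    qed (auto simp: A_def)
    then show ?thesis by auto
  qed
  show "\<exists>A. countable A \<and> A \<subseteq> sets Pi \<and> \<Union> A = space Pi \<and> (\<forall>a\<in>A. emeasure Pi a \<noteq> \<infinity>)"
    by (rule exI[of _ A]) (use fin un sp Ps in \<open>auto simp: A_def\<close>)
qed



lemma LK_conv:
  fixes P :: "real measure" and x d p :: real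
  assumes Ps: "sets P = sets borel" and P0: "emeasure P {..0} = 0"
    and Pm: "(\<integral>\<^sup>+u. ennreal (min u 1) \<partial>P) < \<infinity>"
    and x: "x > 0" and d: "d \<ge> 0"
    and phi: "p = d * (1/x) + (\<integral>u. (1 - exp (- (1/x) * u)) \<partial>P)"
  shows "p \<ge> 0" and "ennreal (x * p) = ennreal d + (\<integral>\<^sup>+u. ennreal (x * (1 - exp (- (1/x) * u))) \<partial>P)"
proof -
  have mP: "measurable P = measurable borel" using measurable_cong_sets[OF Ps refl] by (rule ext)
  have AEp: "AE u in P. u > 0" by (rule AE_Pi_pos[OF Ps P0])
  define q where "q u = 1 - exp (- (1/x) * u)" for u
  have qm: "q \<in> borel_measurable P" unfolding q_def mP by measurable
  have qb: "0 \<le> q u \<and> q u \<le> max 1 (1/x) * min u 1" if u: "u > 0" for u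
  proof -
    have t: "u / x \<ge> 0" using u x by simp
    have e: "- (1/x) * u = - (u / x)" by simp
    have "q u \<le> min 1 (u / x)" unfolding q_def e by (rule exp_bounds(2)[OF t])
    also have "min 1 (u / x) \<le> max 1 (1/x) * min u 1"
    proof (cases "u \<le> 1")
      case True
      have "u / x = (1/x) * u" by simp
      also have "\<dots> \<le> max 1 (1/x) * u" using u by (intro mult_right_mono) auto
      finally show ?thesis using True by (simp add: min_def)
    next
      case False
      then have "min u 1 = 1" by simp
      then show ?thesis by (metis min.cobounded1 max.cobounded1 order_trans mult_1_right)
    qed
    finally show ?thesis using u x unfolding q_def by simp
  qed
  have qint: "integrable P q"
  proof (rule integrableI_bounded[OF qm])
    have "(\<integral>\<^sup>+u. ennreal (norm (q u)) \<partial>P) \<le> (\<integral>\<^sup>+u. ennreal (max 1 (1/x)) * ennreal (min u 1) \<partial>P)"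
    proof (rule nn_integral_mono_AE)
      show "AE u in P. ennreal (norm (q u)) \<le> ennreal (max 1 (1/x)) * ennreal (min u 1)"
        using AEp
      proof eventually_elim
        case (elim u)
        then show ?case using qb[of u] by (subst ennreal_mult[symmetric]) (auto intro: ennreal_leI)
      qed
    qed
    also have "\<dots> = ennreal (max 1 (1/x)) * (\<integral>\<^sup>+u. ennreal (min u 1) \<partial>P)"
      by (rule nn_integral_cmult) (simp add: mP)
    also have "\<dots> < \<infinity>" using Pm by (simp add: ennreal_mult_less_top)
    finally show "(\<integral>\<^sup>+u. ennreal (norm (q u)) \<partial>P) < \<infinity>" .
  qed
  have qAE: "AE u in P. 0 \<le> q u" using AEp by eventually_elim (use qb in auto)
  have I0: "(\<integral>u. q u \<partial>P) \<ge> 0" by (rule integral_nonneg_AE[OF qAE])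
  have Inn: "(\<integral>\<^sup>+u. ennreal (q u) \<partial>P) = ennreal (\<integral>u. q u \<partial>P)"
    by (rule nn_integral_eq_integral[OF qint qAE])
  have pq: "p = d * (1/x) + (\<integral>u. q u \<partial>P)" unfolding phi q_def ..
  show "p \<ge> 0" unfolding pq using I0 d x by simp
  have "x * p = d + x * (\<integral>u. q u \<partial>P)" unfolding pq using x by (simp add: algebra_simps)
  then have "ennreal (x * p) = ennreal d + ennreal x * ennreal (\<integral>u. q u \<partial>P)"
    using d x I0 by (simp add: ennreal_plus[symmetric] ennreal_mult[symmetric] del: ennreal_plus)
  also have "ennreal x * ennreal (\<integral>u. q u \<partial>P) = (\<integral>\<^sup>+u. ennreal x * ennreal (q u) \<partial>P)"
    unfolding Inn[symmetric] by (rule nn_integral_cmult[symmetric]) (simp add: mP q_def)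
  also have "\<dots> = (\<integral>\<^sup>+u. ennreal (x * (1 - exp (- (1/x) * u))) \<partial>P)"
    by (rule nn_integral_cong_AE) (use qAE x in \<open>auto simp: q_def ennreal_mult\<close>)
  finally show "ennreal (x * p) = ennreal d + (\<integral>\<^sup>+u. ennreal (x * (1 - exp (- (1/x) * u))) \<partial>P)" .
qed



lemma part2_pointwise:
  fixes P :: "real measure" and x d p x0 :: real
  assumes Ps: "sets P = sets borel" and P0: "emeasure P {..0} = 0"
    and Pm: "(\<integral>\<^sup>+u. ennreal (min u 1) \<partial>P) < \<infinity>"
    and x: "x > 0" and d: "d \<ge> 0" and x0: "x0 \<ge> 0"
    and phi: "p = d * (1/x) + (\<integral>u. (1 - exp (- (1/x) * u)) \<partial>P)"
  shows "ennreal (min 1 p * x) \<le> ennreal d + (\<integral>\<^sup>+u. ennreal (min x u) \<partial>P)"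
    and "(\<integral>\<^sup>+u. ennreal (min x u) \<partial>P) \<le> (\<integral>\<^sup>+u. ennreal (min x u) * indicator {x0..} u \<partial>P)
           + ennreal (max 1 x0) * (\<integral>\<^sup>+u. ennreal (min u 1) \<partial>P)"
    and "(\<integral>\<^sup>+u. ennreal (min x u) * indicator {x0..} u \<partial>P) \<le>
           ennreal (max 1 (enn2real (\<integral>\<^sup>+u. ennreal (min u 1) \<partial>P)) / (1 - exp (-1))) * ennreal (min 1 p * x)
           + (\<integral>\<^sup>+u. ennreal (min u 1) \<partial>P)"
proof -
  have mP: "measurable P = measurable borel" using measurable_cong_sets[OF Ps refl] by (rule ext)
  have AEp: "AE u in P. u > 0" by (rule AE_Pi_pos[OF Ps P0])
  define A where "A = (\<integral>\<^sup>+u. ennreal (min x u) \<partial>P)"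
  define S where "S = (\<integral>\<^sup>+u. ennreal (x * (1 - exp (- (1/x) * u))) \<partial>P)"
  define m where "m = (\<integral>\<^sup>+u. ennreal (min u 1) \<partial>P)"
  define mr where "mr = enn2real m"
  have m_eq: "m = ennreal mr" unfolding mr_def using Pm m_def by (simp add: less_top ennreal_enn2real)
  have mr0: "mr \<ge> 0" unfolding mr_def by simp
  define c :: real where "c = 1 - exp (-1)"
  have c: "0 < c" "c \<le> 1" unfolding c_def by auto
  have p0: "p \<ge> 0" and xp: "ennreal (x * p) = ennreal d + S"
    using LK_conv[OF Ps P0 Pm x d phi] unfolding S_def by auto
  have SA: "S \<le> A" unfolding S_def A_def
    by (rule nn_integral_mono_AE) (use AEp in \<open>eventually_elim, use pw_bound(2)[OF x] in \<open>auto intro: ennreal_leI\<close>\<close>)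
  have AS: "ennreal c * A \<le> S"
  proof -
    have "ennreal c * A = (\<integral>\<^sup>+u. ennreal c * ennreal (min x u) \<partial>P)"
      unfolding A_def by (rule nn_integral_cmult[symmetric]) (simp add: mP)
    also have "\<dots> \<le> S" unfolding S_def
    proof (rule nn_integral_mono_AE)
      show "AE u in P. ennreal c * ennreal (min x u) \<le> ennreal (x * (1 - exp (- (1/x) * u)))"
        using AEp
      proof eventually_elim
        case (elim u)
        then show ?case using pw_bound(1)[OF x, of u] c x
          by (subst ennreal_mult[symmetric]) (auto intro: ennreal_leI simp: c_def)
      qed
    qed
    finally show ?thesis .
  qed
  have fmin: "ennreal (min 1 p * x) = min (ennreal x) (ennreal (x * p))"
  proof -
    have "min 1 p * x = min x (x * p)" using x by (auto simp: min_def)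
    then show ?thesis using x p0 by (simp add: min_ennreal)
  qed
  show "ennreal (min 1 p * x) \<le> ennreal d + (\<integral>\<^sup>+u. ennreal (min x u) \<partial>P)"
    unfolding fmin xp A_def[symmetric] using SA by (meson add_left_mono min.coboundedI2)
  show "(\<integral>\<^sup>+u. ennreal (min x u) \<partial>P) \<le> (\<integral>\<^sup>+u. ennreal (min x u) * indicator {x0..} u \<partial>P)
           + ennreal (max 1 x0) * (\<integral>\<^sup>+u. ennreal (min u 1) \<partial>P)"
  proof -
    have "(\<integral>\<^sup>+u. ennreal (min x u) \<partial>P) \<le> (\<integral>\<^sup>+u. ennreal (min x u) * indicator {x0..} u + ennreal (max 1 x0) * ennreal (min u 1) \<partial>P)"
    proof (rule nn_integral_mono)
      fix u
      show "ennreal (min x u) \<le> ennreal (min x u) * indicator {x0..} u + ennreal (max 1 x0) * ennreal (min u 1)"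
      proof (cases "u \<ge> x0")
        case True then show ?thesis by simp
      next
        case False
        show ?thesis
        proof (cases "u \<le> 0")
          case True then show ?thesis by (simp add: ennreal_neg)
        next
          case u0: False
          have "min x u \<le> max 1 x0 * min u 1"
          proof (cases "u \<le> 1")
            case True
            have "u \<le> max 1 x0 * u" using u0 mult_right_mono[of 1 "max 1 x0" u] by simp
            then show ?thesis using True by (simp add: min_def)
          next
            case u1: False
            then show ?thesis using False by (simp add: min_def max_def)
          qed
          then show ?thesis using False u0
            by (subst ennreal_mult[symmetric]) (auto intro: ennreal_leI)
        qed
      qed
    qed
    also have "\<dots> = (\<integral>\<^sup>+u. ennreal (min x u) * indicator {x0..} u \<partial>P) + (\<integral>\<^sup>+u. ennreal (max 1 x0) * ennreal (min u 1) \<partial>P)"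
      by (rule nn_integral_add) (simp_all add: mP)
    also have "(\<integral>\<^sup>+u. ennreal (max 1 x0) * ennreal (min u 1) \<partial>P) = ennreal (max 1 x0) * (\<integral>\<^sup>+u. ennreal (min u 1) \<partial>P)"
      by (rule nn_integral_cmult) (simp add: mP)
    finally show ?thesis .
  qed
  have BA: "(\<integral>\<^sup>+u. ennreal (min x u) * indicator {x0..} u \<partial>P) \<le> A"
    unfolding A_def by (rule nn_integral_mono) (simp add: indicator_def)
  define K where "K = max 1 mr"
  have K1: "K \<ge> 1" "mr \<le> K" unfolding K_def by auto
  have AK: "A \<le> ennreal K * min (ennreal x) A + m"
  proof (cases "x < 1")
    case True
    have "A \<le> m" unfolding A_def m_def
      by (rule nn_integral_mono) (use True in \<open>auto intro!: ennreal_leI simp: min_def\<close>)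
    then show ?thesis by (simp add: add_increasing)
  next
    case False
    have "A \<le> (\<integral>\<^sup>+u. ennreal x * ennreal (min u 1) \<partial>P)" unfolding A_def
    proof (rule nn_integral_mono)
      fix u
      show "ennreal (min x u) \<le> ennreal x * ennreal (min u 1)"
      proof (cases "u \<le> 0")
        case True then show ?thesis by (simp add: ennreal_neg)
      next
        case u0: False
        have "min x u \<le> x * min u 1"
        proof (cases "u \<le> 1")
          case True
          have "u \<le> x * u" using u0 False mult_right_mono[of 1 x u] by simp
          then show ?thesis using True by (simp add: min_def)
        qed (simp add: min_def)
        then show ?thesis using x u0 by (subst ennreal_mult[symmetric]) (auto intro: ennreal_leI)
      qed
    qed
    also have "\<dots> = ennreal x * m" unfolding m_def by (rule nn_integral_cmult) (simp add: mP)
    finally have Axm: "A \<le> ennreal x * ennreal mr" using m_eq by simp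
    have "A \<le> ennreal K * min (ennreal x) A"
    proof (cases "A \<le> ennreal x")
      case True
      have "A = ennreal 1 * A" by simp
      also have "\<dots> \<le> ennreal K * A" using K1 by (intro mult_right_mono ennreal_leI) auto
      finally show ?thesis using True by (simp add: min_def)
    next
      case False
      have "ennreal x * ennreal mr \<le> ennreal K * ennreal x" using K1 x mr0
        by (simp add: ennreal_mult[symmetric] mult.commute mult_right_mono)
      moreover have "min (ennreal x) A = ennreal x" using False by (simp add: min_absorb1)
      ultimately show ?thesis using Axm by simp
    qed
    then show ?thesis by (simp add: add_increasing2)
  qed
  have lowf: "ennreal c * min (ennreal x) (ennreal d + A) \<le> ennreal (min 1 p * x)"
  proof -
    have "ennreal c * min (ennreal x) (ennreal d + A) \<le> min (ennreal c * ennreal x) (ennreal c * (ennreal d + A))"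
      by (simp add: mult_left_mono)
    also have "\<dots> \<le> min (ennreal x) (ennreal d + S)"
    proof (rule min.mono)
      show "ennreal c * ennreal x \<le> ennreal x" using c x
        by (subst ennreal_mult[symmetric]) (auto intro!: ennreal_leI mult_left_le_one_le)
      have "ennreal c * ennreal d \<le> ennreal d" using c d
        by (subst ennreal_mult[symmetric]) (auto intro!: ennreal_leI mult_left_le_one_le)
      then show "ennreal c * (ennreal d + A) \<le> ennreal d + S"
        using AS by (simp add: distrib_left add_mono)
    qed
    finally show ?thesis unfolding fmin xp .
  qed
  have minle: "min (ennreal x) (ennreal d + A) \<le> ennreal (1/c) * ennreal (min 1 p * x)"
  proof -
    have "min (ennreal x) (ennreal d + A) = ennreal (1/c) * (ennreal c * min (ennreal x) (ennreal d + A))"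
      using c by (simp add: mult.assoc[symmetric] ennreal_mult[symmetric])
    also have "\<dots> \<le> ennreal (1/c) * ennreal (min 1 p * x)" using lowf by (rule mult_left_mono) simp
    finally show ?thesis .
  qed
  have "(\<integral>\<^sup>+u. ennreal (min x u) * indicator {x0..} u \<partial>P) \<le> ennreal K * min (ennreal x) A + m"
    using BA AK by (rule order_trans)
  also have "\<dots> \<le> ennreal K * (ennreal (1/c) * ennreal (min 1 p * x)) + m"
  proof -
    have "min (ennreal x) A \<le> min (ennreal x) (ennreal d + A)" by (simp add: min.coboundedI2)
    also note minle
    finally show ?thesis by (intro add_right_mono mult_left_mono) auto
  qed
  also have "ennreal K * (ennreal (1/c) * ennreal (min 1 p * x)) = ennreal (K / c) * ennreal (min 1 p * x)"
    using c K1 by (simp add: mult.assoc[symmetric] ennreal_mult[symmetric])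
  finally show "(\<integral>\<^sup>+u. ennreal (min x u) * indicator {x0..} u \<partial>P) \<le>
           ennreal (max 1 (enn2real (\<integral>\<^sup>+u. ennreal (min u 1) \<partial>P)) / (1 - exp (-1))) * ennreal (min 1 p * x)
           + (\<integral>\<^sup>+u. ennreal (min u 1) \<partial>P)"
    unfolding K_def mr_def c_def m_def .
qed



theorem lemma5:
  fixes h h' :: "real \<Rightarrow> real" and x0 :: real and rho :: "real measure"
    and M :: "'a measure" and Z :: "'a \<Rightarrow> real"
    and d :: real and Pi :: "real measure"
  assumes h_nonneg: "\<forall>x\<ge>0. h x \<ge> 0"
    and h_deriv: "\<forall>x\<ge>0. (h has_real_derivative h' x) (at x within {0..})"
    and h'_lim: "(h' \<longlongrightarrow> 0) at_top"
    and x0: "x0 \<ge> 0"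
    and concave: "concave_on {x0..} h"
    and rho_sets: "sets rho = sets borel"
    and rho_finite: "finite_measure rho"
    and rho_supp: "emeasure rho {..<x0} = 0"
    and rho_h': "\<forall>x\<ge>x0. h' x = measure rho {x..}"
    and M: "prob_space M"
    and Z_meas: "Z \<in> borel_measurable M"
    and Z_nonneg: "AE \<omega> in M. Z \<omega> \<ge> 0"
  shows "((\<integral>\<^sup>+ \<omega>. ennreal (h (Z \<omega>)) \<partial>M) < \<infinity> \<longleftrightarrow>
           (\<integral>\<^sup>+ x \<in> {x0..}. ennreal (min 1 (laplace_exponent M Z (1 / x)) * x) \<partial>rho) < \<infinity>)
    \<and> (d \<ge> 0 \<and> sets Pi = sets borel \<and> emeasure Pi {..0} = 0
         \<and> (\<integral>\<^sup>+ x. ennreal (min x 1) \<partial>Pi) < \<infinity>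
         \<and> (\<forall>l\<ge>0. laplace_exponent M Z l = d * l + (\<integral>x. (1 - exp (- l * x)) \<partial>Pi))
       \<longrightarrow> (\<forall>u\<ge>x0. chi rho x0 u = ennreal (h u - h x0 + x0 * h' x0))
         \<and> ((\<integral>\<^sup>+ \<omega>. ennreal (h (Z \<omega>)) \<partial>M) < \<infinity> \<longleftrightarrow>
              (\<integral>\<^sup>+ u \<in> {x0..}. chi rho x0 u \<partial>Pi) < \<infinity>)
         \<and> ((\<integral>\<^sup>+ u \<in> {x0..}. chi rho x0 u \<partial>Pi) < \<infinity> \<longleftrightarrow>
              (\<integral>\<^sup>+ u \<in> {x0..}. ennreal (h u - h x0) \<partial>Pi) < \<infinity>))"
proof -
  interpret M: prob_space M by fact
  interpret rho: finite_measure rho by fact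
  have mrho: "measurable rho = measurable borel" using measurable_cong_sets[OF rho_sets refl] by (rule ext)
  note Z_meas[measurable]
  define Z' where "Z' \<omega> = max 0 (Z \<omega>)" for \<omega>
  have Z'm[measurable]: "Z' \<in> borel_measurable M" unfolding Z'_def by measurable
  have Z'n: "\<And>\<omega>. Z' \<omega> \<ge> 0" unfolding Z'_def by simp
  have AEZ: "AE \<omega> in M. Z \<omega> = Z' \<omega>" using Z_nonneg by eventually_elim (simp add: Z'_def)
  have LE: "laplace_exponent M Z l = laplace_exponent M Z' l" for l
  proof -
    have "(\<integral>\<omega>. exp (- l * Z \<omega>) \<partial>M) = (\<integral>\<omega>. exp (- l * Z' \<omega>) \<partial>M)"
      by (rule integral_cong_AE) (use AEZ in auto)
    then show ?thesis unfolding laplace_exponent_def by simp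
  qed
  have Eh: "(\<integral>\<^sup>+\<omega>. ennreal (h (Z \<omega>)) \<partial>M) = (\<integral>\<^sup>+\<omega>. ennreal (h (Z' \<omega>)) \<partial>M)"
    by (rule nn_integral_cong_AE) (use AEZ in auto)
  have AEx0: "AE x in rho. x \<ge> x0"
  proof (rule AE_I[where N="{..<x0}"])
    show "{x \<in> space rho. \<not> x0 \<le> x} \<subseteq> {..<x0}" by auto
    show "emeasure rho {..<x0} = 0" by fact
    show "{..<x0} \<in> sets rho" using rho_sets by simp
  qed
  define g where "g u = (\<integral>\<^sup>+x. ennreal (min x u) \<partial>rho)" for u
  have gform: "g u = ennreal (h u - h x0 + x0 * h' x0)" and hmono: "h u - h x0 \<ge> 0" if "u \<ge> x0" for u
    using chi_formula[OF h_deriv x0 rho_sets rho_finite rho_supp rho_h' that] unfolding g_def by auto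
  have chi_g: "chi rho x0 u = g u" for u
    unfolding chi_def g_def by (rule nn_integral_cong_AE) (use AEx0 in \<open>auto simp: indicator_def\<close>)
  have gmeas: "g \<in> borel_measurable borel"
  proof -
    have "case_prod (\<lambda>u x. ennreal (min x u)) \<in> borel_measurable (borel \<Otimes>\<^sub>M rho)"
    proof -
      have "case_prod (\<lambda>u x. ennreal (min x u)) \<in> borel_measurable (borel \<Otimes>\<^sub>M borel)" by measurable
      moreover have "sets (borel \<Otimes>\<^sub>M rho) = sets (borel \<Otimes>\<^sub>M borel)"
        by (rule sets_pair_measure_cong) (simp_all add: rho_sets)
      ultimately show ?thesis using measurable_cong_sets by blast
    qed
    then show ?thesis unfolding g_def by (rule rho.borel_measurable_nn_integral)
  qed
  have gmono: "g u \<le> g v" if "u \<le> v" for u v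
    unfolding g_def by (rule nn_integral_mono) (use that in \<open>auto intro!: ennreal_leI\<close>)
  have h'x0: "h' x0 \<ge> 0" using rho_h' by simp
  have Cont: "continuous_on {0..} h"
    by (rule DERIV_continuous_on) (use h_deriv in auto)
  have Cont2: "continuous_on UNIV (\<lambda>u. h (max 0 u))"
    by (rule continuous_on_compose2[OF Cont]) (auto intro!: continuous_intros)
  obtain B where B: "\<And>u. u \<in> {0..x0} \<Longrightarrow> \<bar>h u\<bar> \<le> B"
  proof -
    have "compact (h ` {0..x0})"
      by (rule compact_continuous_image) (use continuous_on_subset[OF Cont] in auto)
    then have "bounded (h ` {0..x0})" by (rule compact_imp_bounded)
    then obtain B where "\<forall>y\<in>h ` {0..x0}. norm y \<le> B" unfolding bounded_iff by blast
    then show ?thesis by (intro that[of B]) auto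
  qed
  define K where "K = \<bar>h x0 - x0 * h' x0\<bar> + \<bar>B\<bar> + x0 * h' x0"
  have K0: "K \<ge> 0" unfolding K_def using x0 h'x0 by simp
  have bnd1: "ennreal (h u) \<le> g u + ennreal K" and bnd2: "g u \<le> ennreal (h u) + ennreal K" if u: "u \<ge> 0" for u
  proof -
    have hu: "h u \<ge> 0" using h_nonneg u by simp
    have "ennreal (h u) \<le> g u + ennreal K \<and> g u \<le> ennreal (h u) + ennreal K"
    proof (cases "u \<ge> x0")
      case True
      define a where "a = h u - h x0 + x0 * h' x0"
      have a0: "a \<ge> 0" unfolding a_def using hmono[OF True] x0 h'x0 by simp
      have "h u \<le> a + K" unfolding a_def K_def
        using abs_ge_self[of "h x0 - x0 * h' x0"] abs_ge_zero[of B] mult_nonneg_nonneg[OF x0 h'x0] by linarith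
      then have 1: "ennreal (h u) \<le> ennreal a + ennreal K"
        using a0 K0 by (simp add: ennreal_plus[symmetric] ennreal_leI del: ennreal_plus)
      have "a \<le> h u + K" unfolding a_def K_def
        using abs_ge_minus_self[of "h x0 - x0 * h' x0"] abs_ge_zero[of B] mult_nonneg_nonneg[OF x0 h'x0] by linarith
      then have 2: "ennreal a \<le> ennreal (h u) + ennreal K"
        using hu K0 by (simp add: ennreal_plus[symmetric] ennreal_leI del: ennreal_plus)
      show ?thesis using 1 2 gform[OF True] a_def by simp
    next
      case False
      have "h u \<le> K" using B[of u] u False unfolding K_def
        using abs_ge_self[of "h u"] abs_ge_zero[of "h x0 - x0 * h' x0"] mult_nonneg_nonneg[OF x0 h'x0] by simp
      then have 1: "ennreal (h u) \<le> g u + ennreal K" by (simp add: add_increasing ennreal_leI)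
      have "g u \<le> g x0" using False by (intro gmono) simp
      also have "\<dots> = ennreal (x0 * h' x0)" using gform[of x0] by simp
      also have "\<dots> \<le> ennreal K" unfolding K_def by (intro ennreal_leI) simp
      finally have 2: "g u \<le> ennreal (h u) + ennreal K" by (simp add: add_increasing)
      show ?thesis using 1 2 by simp
    qed
    then show "ennreal (h u) \<le> g u + ennreal K" "g u \<le> ennreal (h u) + ennreal K" by auto
  qed
  have hZm: "(\<lambda>\<omega>. ennreal (h (Z' \<omega>))) \<in> borel_measurable M"
  proof -
    have "(\<lambda>\<omega>. h (max 0 (Z \<omega>))) \<in> borel_measurable M"
      by (rule borel_measurable_continuous_on[OF Cont2 Z_meas])
    then show ?thesis unfolding Z'_def by measurable
  qed
  have gZm: "(\<lambda>\<omega>. g (Z' \<omega>)) \<in> borel_measurable M"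
    using measurable_comp[OF Z'm gmeas] by (simp add: comp_def)
  have step1: "(\<integral>\<^sup>+\<omega>. ennreal (h (Z' \<omega>)) \<partial>M) < \<infinity> \<longleftrightarrow> (\<integral>\<^sup>+\<omega>. g (Z' \<omega>) \<partial>M) < \<infinity>"
  proof
    assume H: "(\<integral>\<^sup>+\<omega>. ennreal (h (Z' \<omega>)) \<partial>M) < \<infinity>"
    show "(\<integral>\<^sup>+\<omega>. g (Z' \<omega>) \<partial>M) < \<infinity>"
    proof (rule fin_cmp[OF M.finite_measure_axioms hZm _ H])
      show "AE \<omega> in M. g (Z' \<omega>) \<le> ennreal 1 * ennreal (h (Z' \<omega>)) + ennreal K"
        using bnd2 Z'n by simp
    qed
  next
    assume H: "(\<integral>\<^sup>+\<omega>. g (Z' \<omega>) \<partial>M) < \<infinity>"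
    show "(\<integral>\<^sup>+\<omega>. ennreal (h (Z' \<omega>)) \<partial>M) < \<infinity>"
    proof (rule fin_cmp[OF M.finite_measure_axioms gZm _ H])
      show "AE \<omega> in M. ennreal (h (Z' \<omega>)) \<le> ennreal 1 * g (Z' \<omega>) + ennreal K"
        using bnd1 Z'n by simp
    qed
  qed
  define e where "e x = (\<integral>\<^sup>+\<omega>. ennreal (min x (Z' \<omega>)) \<partial>M)" for x
  have pMr: "pair_sigma_finite M rho"
    by (simp add: pair_sigma_finite_def M.sigma_finite_measure_axioms rho.sigma_finite_measure_axioms)
  have Mrm: "case_prod (\<lambda>\<omega> x. ennreal (min x (Z' \<omega>))) \<in> borel_measurable (M \<Otimes>\<^sub>M rho)"
  proof -
    have "case_prod (\<lambda>\<omega> x. ennreal (min x (Z' \<omega>))) \<in> borel_measurable (M \<Otimes>\<^sub>M borel)" by measurable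
    moreover have "sets (M \<Otimes>\<^sub>M rho) = sets (M \<Otimes>\<^sub>M borel)"
      by (rule sets_pair_measure_cong) (simp_all add: rho_sets)
    ultimately show ?thesis using measurable_cong_sets by blast
  qed
  have step2: "(\<integral>\<^sup>+\<omega>. g (Z' \<omega>) \<partial>M) = (\<integral>\<^sup>+x. e x \<partial>rho)"
    unfolding g_def e_def using pair_sigma_finite.Fubini'[OF pMr Mrm] by simp
  have emeas: "e \<in> borel_measurable rho"
  proof -
    have "case_prod (\<lambda>x \<omega>. ennreal (min x (Z' \<omega>))) \<in> borel_measurable (rho \<Otimes>\<^sub>M M)"
    proof -
      have "case_prod (\<lambda>x \<omega>. ennreal (min x (Z' \<omega>))) \<in> borel_measurable (borel \<Otimes>\<^sub>M M)" by measurable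
      moreover have "sets (rho \<Otimes>\<^sub>M M) = sets (borel \<Otimes>\<^sub>M M)"
        by (rule sets_pair_measure_cong) (simp_all add: rho_sets)
      ultimately show ?thesis using measurable_cong_sets by blast
    qed
    then show ?thesis unfolding e_def by (rule M.borel_measurable_nn_integral)
  qed
  define fp where "fp x = ennreal (min 1 (laplace_exponent M Z (1 / x)) * x)" for x
  have fpmeas: "fp \<in> borel_measurable rho"
    unfolding fp_def laplace_exponent_def mrho by measurable
  have fp_restr: "(\<integral>\<^sup>+ x \<in> {x0..}. ennreal (min 1 (laplace_exponent M Z (1 / x)) * x) \<partial>rho) = (\<integral>\<^sup>+x. fp x \<partial>rho)"
    unfolding fp_def by (rule nn_integral_cong_AE) (use AEx0 in \<open>auto simp: indicator_def\<close>)
  define C where "C = 1 / (1 - exp (- 1::real))"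
  have cmp1: "AE x in rho. e x \<le> ennreal C * fp x + ennreal 0 \<and> fp x \<le> ennreal C * e x + ennreal 0"
    using AEx0
  proof eventually_elim
    case (elim x)
    show ?case
    proof (cases "x = 0")
      case True
      have "e x = 0" unfolding e_def True using Z'n by (simp add: min_def)
      moreover have "fp x = 0" unfolding fp_def True by simp
      ultimately show ?thesis by simp
    next
      case False
      then have xp: "x > 0" using elim x0 by simp
      show ?thesis using part1_pointwise[OF M Z'm Z'n xp] unfolding e_def fp_def LE C_def by simp
    qed
  qed
  have step3: "(\<integral>\<^sup>+x. e x \<partial>rho) < \<infinity> \<longleftrightarrow> (\<integral>\<^sup>+x. fp x \<partial>rho) < \<infinity>"
  proof
    assume H: "(\<integral>\<^sup>+x. e x \<partial>rho) < \<infinity>"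
    show "(\<integral>\<^sup>+x. fp x \<partial>rho) < \<infinity>"
      by (rule fin_cmp[OF rho_finite emeas _ H, where c=C and k=0]) (use cmp1 in auto)
  next
    assume H: "(\<integral>\<^sup>+x. fp x \<partial>rho) < \<infinity>"
    show "(\<integral>\<^sup>+x. e x \<partial>rho) < \<infinity>"
      by (rule fin_cmp[OF rho_finite fpmeas _ H, where c=C and k=0]) (use cmp1 in auto)
  qed
  have part1: "(\<integral>\<^sup>+ \<omega>. ennreal (h (Z \<omega>)) \<partial>M) < \<infinity> \<longleftrightarrow> (\<integral>\<^sup>+x. fp x \<partial>rho) < \<infinity>"
    unfolding Eh step1 step2 step3 ..
  show ?thesis
  proof
    show "((\<integral>\<^sup>+ \<omega>. ennreal (h (Z \<omega>)) \<partial>M) < \<infinity> \<longleftrightarrow>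
           (\<integral>\<^sup>+ x \<in> {x0..}. ennreal (min 1 (laplace_exponent M Z (1 / x)) * x) \<partial>rho) < \<infinity>)"
      unfolding fp_restr part1 ..
  next
    show "d \<ge> 0 \<and> sets Pi = sets borel \<and> emeasure Pi {..0} = 0
         \<and> (\<integral>\<^sup>+ x. ennreal (min x 1) \<partial>Pi) < \<infinity>
         \<and> (\<forall>l\<ge>0. laplace_exponent M Z l = d * l + (\<integral>x. (1 - exp (- l * x)) \<partial>Pi))
       \<longrightarrow> (\<forall>u\<ge>x0. chi rho x0 u = ennreal (h u - h x0 + x0 * h' x0))
         \<and> ((\<integral>\<^sup>+ \<omega>. ennreal (h (Z \<omega>)) \<partial>M) < \<infinity> \<longleftrightarrow>
              (\<integral>\<^sup>+ u \<in> {x0..}. chi rho x0 u \<partial>Pi) < \<infinity>)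
         \<and> ((\<integral>\<^sup>+ u \<in> {x0..}. chi rho x0 u \<partial>Pi) < \<infinity> \<longleftrightarrow>
              (\<integral>\<^sup>+ u \<in> {x0..}. ennreal (h u - h x0) \<partial>Pi) < \<infinity>)"
    proof (intro impI)
      assume hyp: "d \<ge> 0 \<and> sets Pi = sets borel \<and> emeasure Pi {..0} = 0
         \<and> (\<integral>\<^sup>+ x. ennreal (min x 1) \<partial>Pi) < \<infinity>
         \<and> (\<forall>l\<ge>0. laplace_exponent M Z l = d * l + (\<integral>x. (1 - exp (- l * x)) \<partial>Pi))"
      then have d: "d \<ge> 0" and Ps: "sets Pi = sets borel" and P0: "emeasure Pi {..0} = 0"
        and Pm: "(\<integral>\<^sup>+ u. ennreal (min u 1) \<partial>Pi) < \<infinity>"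
        and LK: "\<And>l. l \<ge> 0 \<Longrightarrow> laplace_exponent M Z l = d * l + (\<integral>x. (1 - exp (- l * x)) \<partial>Pi)"
        by auto
      have mP: "measurable Pi = measurable borel" using measurable_cong_sets[OF Ps refl] by (rule ext)
      interpret Pi: sigma_finite_measure Pi by (rule sigma_finite_Pi[OF Ps P0 Pm])
      have pa: "\<forall>u\<ge>x0. chi rho x0 u = ennreal (h u - h x0 + x0 * h' x0)"
        using chi_g gform by simp
      define Bf where "Bf x = (\<integral>\<^sup>+u. ennreal (min x u) * indicator {x0..} u \<partial>Pi)" for x
      have pRP: "pair_sigma_finite rho Pi"
        by (simp add: pair_sigma_finite_def Pi.sigma_finite_measure_axioms rho.sigma_finite_measure_axioms)
      have RPm: "case_prod (\<lambda>x u. ennreal (min x u) * indicator {x0..} u) \<in> borel_measurable (rho \<Otimes>\<^sub>M Pi)"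
      proof -
        have "case_prod (\<lambda>x u. ennreal (min x u) * indicator {x0..} u) \<in> borel_measurable (borel \<Otimes>\<^sub>M borel)" by measurable
        moreover have "sets (rho \<Otimes>\<^sub>M Pi) = sets (borel \<Otimes>\<^sub>M borel)"
          by (rule sets_pair_measure_cong) (simp_all add: rho_sets Ps)
        ultimately show ?thesis using measurable_cong_sets by blast
      qed
      have chiInt: "(\<integral>\<^sup>+ u \<in> {x0..}. chi rho x0 u \<partial>Pi) = (\<integral>\<^sup>+x. Bf x \<partial>rho)"
      proof -
        have "(\<integral>\<^sup>+ u \<in> {x0..}. chi rho x0 u \<partial>Pi) = (\<integral>\<^sup>+ u. (\<integral>\<^sup>+x. ennreal (min x u) * indicator {x0..} u \<partial>rho) \<partial>Pi)"
        proof (rule nn_integral_cong)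
          fix u
          show "chi rho x0 u * indicator {x0..} u = (\<integral>\<^sup>+x. ennreal (min x u) * indicator {x0..} u \<partial>rho)"
            unfolding chi_g g_def by (rule nn_integral_multc[symmetric]) (simp add: mrho)
        qed
        also have "\<dots> = (\<integral>\<^sup>+x. Bf x \<partial>rho)"
          unfolding Bf_def by (rule pair_sigma_finite.Fubini'[OF pRP RPm])
        finally show ?thesis .
      qed
      have Bfmeas: "Bf \<in> borel_measurable rho"
        unfolding Bf_def by (rule Pi.borel_measurable_nn_integral[OF RPm])
      define mr where "mr = enn2real (\<integral>\<^sup>+ u. ennreal (min u 1) \<partial>Pi)"
      have m_eq: "(\<integral>\<^sup>+ u. ennreal (min u 1) \<partial>Pi) = ennreal mr"
        unfolding mr_def using Pm by (simp add: less_top ennreal_enn2real)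
      have mr0: "mr \<ge> 0" unfolding mr_def by simp
      define K2 where "K2 = max 1 mr / (1 - exp (-1))"
      have cmp2: "AE x in rho. fp x \<le> ennreal 1 * Bf x + ennreal (d + max 1 x0 * mr) \<and> Bf x \<le> ennreal K2 * fp x + ennreal mr"
        using AEx0
      proof eventually_elim
        case (elim x)
        show ?case
        proof (cases "x = 0")
          case True
          have "Bf x = 0" unfolding Bf_def True
            by (rule nn_integral_zero') (use x0 in \<open>auto simp: indicator_def min_def\<close>)
          moreover have "fp x = 0" unfolding fp_def True by simp
          ultimately show ?thesis by simp
        next
          case False
          then have xp: "x > 0" using elim x0 by simp
          have phi: "laplace_exponent M Z (1/x) = d * (1/x) + (\<integral>u. (1 - exp (- (1/x) * u)) \<partial>Pi)"
            using LK[of "1/x"] xp by simp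
          note pp = part2_pointwise[OF Ps P0 Pm xp d x0 phi]
          have 1: "fp x \<le> ennreal 1 * Bf x + ennreal (d + max 1 x0 * mr)"
          proof -
            have "fp x \<le> ennreal d + (Bf x + ennreal (max 1 x0) * ennreal mr)"
              using pp(1) pp(2) unfolding fp_def Bf_def m_eq by (meson add_left_mono order_trans)
            also have "\<dots> = ennreal 1 * Bf x + ennreal (d + max 1 x0 * mr)"
              using d mr0 by (simp add: ennreal_mult[symmetric] ennreal_plus[symmetric] add_ac del: ennreal_plus)
            finally show ?thesis .
          qed
          have 2: "Bf x \<le> ennreal K2 * fp x + ennreal mr"
            using pp(3) mr0 unfolding fp_def Bf_def K2_def m_eq by simp
          show ?thesis using 1 2 by simp
        qed
      qed
      have step4: "(\<integral>\<^sup>+x. fp x \<partial>rho) < \<infinity> \<longleftrightarrow> (\<integral>\<^sup>+x. Bf x \<partial>rho) < \<infinity>"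
      proof
        assume H: "(\<integral>\<^sup>+x. fp x \<partial>rho) < \<infinity>"
        show "(\<integral>\<^sup>+x. Bf x \<partial>rho) < \<infinity>"
          by (rule fin_cmp[OF rho_finite fpmeas _ H, where c=K2 and k=mr]) (use cmp2 in auto)
      next
        assume H: "(\<integral>\<^sup>+x. Bf x \<partial>rho) < \<infinity>"
        show "(\<integral>\<^sup>+x. fp x \<partial>rho) < \<infinity>"
          by (rule fin_cmp[OF rho_finite Bfmeas _ H, where c=1 and k="d + max 1 x0 * mr"]) (use cmp2 in auto)
      qed
      have pb: "(\<integral>\<^sup>+ \<omega>. ennreal (h (Z \<omega>)) \<partial>M) < \<infinity> \<longleftrightarrow> (\<integral>\<^sup>+ u \<in> {x0..}. chi rho x0 u \<partial>Pi) < \<infinity>"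
        unfolding part1 step4 chiInt ..
      define C0 where "C0 = x0 * h' x0"
      have C00: "C0 \<ge> 0" unfolding C0_def using x0 h'x0 by simp
      have chi_split: "chi rho x0 u * indicator {x0..} u = ennreal (h (max 0 u) - h x0) * indicator {x0..} u + ennreal C0 * indicator {x0..} u" for u
      proof (cases "u \<ge> x0")
        case True
        then have "max 0 u = u" using x0 by simp
        then show ?thesis using True pa hmono[OF True] C00 unfolding C0_def
          by (simp add: ennreal_plus[symmetric] del: ennreal_plus)
      qed simp
      have hmeas: "(\<lambda>u. ennreal (h (max 0 u) - h x0) * indicator {x0..} u) \<in> borel_measurable Pi"
      proof -
        have "(\<lambda>u. h (max 0 u)) \<in> borel_measurable borel" by (rule borel_measurable_continuous_onI[OF Cont2])
        then show ?thesis unfolding mP by measurable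
      qed
      have hrestr: "(\<integral>\<^sup>+ u \<in> {x0..}. ennreal (h u - h x0) \<partial>Pi) = (\<integral>\<^sup>+ u. ennreal (h (max 0 u) - h x0) * indicator {x0..} u \<partial>Pi)"
        by (rule nn_integral_cong) (use x0 in \<open>auto simp: indicator_def\<close>)
      have Pfin: "ennreal C0 * emeasure Pi {x0..} < \<infinity>"
      proof (cases "x0 = 0")
        case True then show ?thesis unfolding C0_def by simp
      next
        case False
        then have x0p: "x0 > 0" using x0 by simp
        have "emeasure Pi {x0..} = (\<integral>\<^sup>+u. indicator {x0..} u \<partial>Pi)" using Ps by simp
        also have "\<dots> \<le> (\<integral>\<^sup>+u. ennreal (1 / min x0 1) * ennreal (min u 1) \<partial>Pi)"
        proof (rule nn_integral_mono)
          fix u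
          show "indicator {x0..} u \<le> ennreal (1 / min x0 1) * ennreal (min u 1)"
          proof (cases "u \<ge> x0")
            case True
            have "min x0 1 \<le> min u 1" using True by simp
            then have "1 \<le> (1 / min x0 1) * min u 1" using x0p by (simp add: field_simps)
            then show ?thesis using True x0p
              by (subst ennreal_mult[symmetric]) (auto intro: ennreal_leI)
          qed simp
        qed
        also have "\<dots> = ennreal (1 / min x0 1) * (\<integral>\<^sup>+u. ennreal (min u 1) \<partial>Pi)"
          by (rule nn_integral_cmult) (simp add: mP)
        also have "\<dots> < \<infinity>" using Pm by (simp add: ennreal_mult_less_top)
        finally show ?thesis by (simp add: ennreal_mult_less_top)
      qed
      have pc: "(\<integral>\<^sup>+ u \<in> {x0..}. chi rho x0 u \<partial>Pi) < \<infinity> \<longleftrightarrow> (\<integral>\<^sup>+ u \<in> {x0..}. ennreal (h u - h x0) \<partial>Pi) < \<infinity>"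
      proof -
        have eq: "(\<integral>\<^sup>+ u \<in> {x0..}. chi rho x0 u \<partial>Pi) = (\<integral>\<^sup>+ u \<in> {x0..}. ennreal (h u - h x0) \<partial>Pi) + ennreal C0 * emeasure Pi {x0..}"
        proof -
          have "(\<integral>\<^sup>+ u \<in> {x0..}. chi rho x0 u \<partial>Pi) = (\<integral>\<^sup>+ u. ennreal (h (max 0 u) - h x0) * indicator {x0..} u + ennreal C0 * indicator {x0..} u \<partial>Pi)"
            unfolding chi_split ..
          also have "\<dots> = (\<integral>\<^sup>+ u. ennreal (h (max 0 u) - h x0) * indicator {x0..} u \<partial>Pi) + (\<integral>\<^sup>+ u. ennreal C0 * indicator {x0..} u \<partial>Pi)"
            by (rule nn_integral_add[OF hmeas]) (simp add: mP)
          also have "(\<integral>\<^sup>+ u. ennreal C0 * indicator {x0..} u \<partial>Pi) = ennreal C0 * emeasure Pi {x0..}"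
            using Ps by (simp add: nn_integral_cmult_indicator)
          finally show ?thesis unfolding hrestr .
        qed
        show ?thesis unfolding eq using Pfin by (simp add: less_top)
      qed
      show "(\<forall>u\<ge>x0. chi rho x0 u = ennreal (h u - h x0 + x0 * h' x0))
         \<and> ((\<integral>\<^sup>+ \<omega>. ennreal (h (Z \<omega>)) \<partial>M) < \<infinity> \<longleftrightarrow>
              (\<integral>\<^sup>+ u \<in> {x0..}. chi rho x0 u \<partial>Pi) < \<infinity>)
         \<and> ((\<integral>\<^sup>+ u \<in> {x0..}. chi rho x0 u \<partial>Pi) < \<infinity> \<longleftrightarrow>
              (\<integral>\<^sup>+ u \<in> {x0..}. ennreal (h u - h x0) \<partial>Pi) < \<infinity>)"
        using pa pb pc by blast
    qed
  qed
qed


end
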